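(* Let $M$ be a $3$-connected matroid with a $3$-connected minor $N$ where $|E(N)|\ge 4$. If $T$ is an $N$-grounded triangle of $M$ and $x\in T$, then $M/x$ does not have an $N$-minor.
   Context: "Has an $N$-minor" means has a minor isomorphic to $N$. A triangle $T$ of $M$ is $N$-grounded if for all distinct $a,b\in T$, none of $M/a/b$, $M/a\backslash b$, $M\backslash a/b$, $M\backslash a\backslash b$ has an $N$-minor. *)

theory Defs
  imports Main
begin

record 'a matroid =
  ground :: "'a set"
  indep :: "'a set \<Rightarrow> bool"

definition matroid :: "'a matroid \<Rightarrow> bool" where
  "matroid M \<longleftrightarrow>
     finite (ground M) \<and>
     indep M {} \<and>
     (\<forall>X. indep M X \<longrightarrow> X \<subseteq> ground M) \<and>
     (\<forall>X Y. indep M Y \<and> X \<subseteq> Y \<longrightarrow> indep M X) \<and>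
     (\<forall>X Y. indep M X \<and> indep M Y \<and> card X < card Y \<longrightarrow>
        (\<exists>e \<in> Y - X. indep M (insert e X)))"

definition rk :: "'a matroid \<Rightarrow> 'a set \<Rightarrow> nat" where
  "rk M X = Max (card ` {I. I \<subseteq> X \<and> indep M I})"

definition delete :: "'a matroid \<Rightarrow> 'a set \<Rightarrow> 'a matroid" where
  "delete M D = \<lparr> ground = ground M - D,
                  indep = (\<lambda>I. indep M I \<and> I \<inter> D = {}) \<rparr>"

definition contract :: "'a matroid \<Rightarrow> 'a set \<Rightarrow> 'a matroid" where
  "contract M C = \<lparr> ground = ground M - C,
                    indep = (\<lambda>I. I \<subseteq> ground M - C \<and>
                                 rk M (I \<union> (C \<inter> ground M)) = card I + rk M (C \<inter> ground M)) \<rparr>"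

definition is_minor :: "'a matroid \<Rightarrow> 'a matroid \<Rightarrow> bool" where
  "is_minor M' M \<longleftrightarrow> (\<exists>C D. C \<subseteq> ground M \<and> D \<subseteq> ground M \<and> C \<inter> D = {} \<and>
                          M' = delete (contract M C) D)"

definition iso :: "'a matroid \<Rightarrow> 'b matroid \<Rightarrow> bool" where
  "iso M N \<longleftrightarrow> (\<exists>f. bij_betw f (ground M) (ground N) \<and>
                   (\<forall>X \<subseteq> ground M. indep M X \<longleftrightarrow> indep N (f ` X)))"

definition has_minor :: "'a matroid \<Rightarrow> 'b matroid \<Rightarrow> bool" where
  "has_minor M N \<longleftrightarrow> (\<exists>M'. is_minor M' M \<and> iso M' N)"

definition circuit :: "'a matroid \<Rightarrow> 'a set \<Rightarrow> bool" where
  "circuit M C \<longleftrightarrow> C \<subseteq> ground M \<and> \<not> indep M C \<and> (\<forall>e \<in> C. indep M (C - {e}))"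

definition triangle :: "'a matroid \<Rightarrow> 'a set \<Rightarrow> bool" where
  "triangle M T \<longleftrightarrow> circuit M T \<and> card T = 3"

definition j_separation :: "'a matroid \<Rightarrow> nat \<Rightarrow> 'a set \<Rightarrow> bool" where
  "j_separation M j X \<longleftrightarrow> X \<subseteq> ground M \<and> card X \<ge> j \<and> card (ground M - X) \<ge> j \<and>
     rk M X + rk M (ground M - X) < rk M (ground M) + j"

definition three_connected :: "'a matroid \<Rightarrow> bool" where
  "three_connected M \<longleftrightarrow> (\<forall>j X. 1 \<le> j \<and> j < 3 \<longrightarrow> \<not> j_separation M j X)"

definition N_grounded :: "'a matroid \<Rightarrow> 'b matroid \<Rightarrow> 'a set \<Rightarrow> bool" where
  "N_grounded M N T \<longleftrightarrow> triangle M T \<and>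
     (\<forall>a \<in> T. \<forall>b \<in> T. a \<noteq> b \<longrightarrow>
        \<not> has_minor (contract (contract M {a}) {b}) N \<and>
        \<not> has_minor (delete (contract M {a}) {b}) N \<and>
        \<not> has_minor (contract (delete M {a}) {b}) N \<and>
        \<not> has_minor (delete (delete M {a}) {b}) N)"

end

theory Submission
  imports Defs
begin

lemma indep_delete[simp]: "indep (delete M D) I \<longleftrightarrow> indep M I \<and> I \<inter> D = {}"
  unfolding delete_def by simp
lemma ground_delete[simp]: "ground (delete M D) = ground M - D"
  unfolding delete_def by simp
lemma indep_contract: "indep (contract M C) I \<longleftrightarrow> I \<subseteq> ground M - C \<and>
     rk M (I \<union> (C \<inter> ground M)) = card I + rk M (C \<inter> ground M)"
  unfolding contract_def by simp
lemma ground_contract[simp]: "ground (contract M C) = ground M - C"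
  unfolding contract_def by simp
lemma circ_dep: "circuit M C \<Longrightarrow> \<not> indep M C"
  unfolding circuit_def by simp
lemma circ_min: "circuit M C \<Longrightarrow> e \<in> C \<Longrightarrow> indep M (C - {e})"
  unfolding circuit_def by simp
lemma meq: "ground M1 = ground M2 \<Longrightarrow> (\<And>I. indep M1 I = indep M2 I) \<Longrightarrow> M1 = (M2::'a matroid)"
  by (rule matroid.equality) auto

lemma rk_ex:
  assumes "finite (ground K)" "indep K {}" "\<And>I. indep K I \<Longrightarrow> I \<subseteq> ground K"
  shows "\<exists>I. I \<subseteq> X \<and> indep K I \<and> card I = rk K X"
proof -
  let ?S = "{I. I \<subseteq> X \<and> indep K I}"
  have "?S \<subseteq> Pow (ground K)" using assms(3) by auto
  hence fin: "finite ?S" using assms(1) finite_subset by blast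
  have ne: "?S \<noteq> {}" using assms(2) by blast
  have "rk K X \<in> card ` ?S" unfolding rk_def using fin ne by (intro Max_in) auto
  thus ?thesis by auto
qed

lemma rk_ge:
  assumes "finite (ground K)" "indep K {}" "\<And>I. indep K I \<Longrightarrow> I \<subseteq> ground K"
    and "I \<subseteq> X" "indep K I"
  shows "card I \<le> rk K X"
proof -
  let ?S = "{I. I \<subseteq> X \<and> indep K I}"
  have "?S \<subseteq> Pow (ground K)" using assms(3) by auto
  hence fin: "finite ?S" using assms(1) finite_subset by blast
  show ?thesis unfolding rk_def using fin assms(4,5) by (intro Max_ge) auto
qed

lemma matroid_wf:
  assumes "matroid K"
  shows "finite (ground K)" "indep K {}" "\<And>I. indep K I \<Longrightarrow> I \<subseteq> ground K"
  using assms unfolding matroid_def by auto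

lemma matroid_aug:
  assumes "matroid K" "indep K X" "indep K Y" "card X < card Y"
  shows "\<exists>e \<in> Y - X. indep K (insert e X)"
proof -
  have "\<forall>X Y. indep K X \<and> indep K Y \<and> card X < card Y \<longrightarrow>
        (\<exists>e \<in> Y - X. indep K (insert e X))" using assms(1) unfolding matroid_def by (elim conjE)
  thus ?thesis using assms(2-4) by blast
qed

lemma matroid_sub:
  assumes "matroid K" "indep K Y" "X \<subseteq> Y"
  shows "indep K X"
proof -
  have "\<forall>X Y. indep K Y \<and> X \<subseteq> Y \<longrightarrow> indep K X" using assms(1) unfolding matroid_def by (elim conjE)
  thus ?thesis using assms(2-3) by blast
qed

lemma m_rk_ex:
  assumes "matroid K"
  shows "\<exists>I. I \<subseteq> X \<and> indep K I \<and> card I = rk K X"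
  using rk_ex[of K X] matroid_wf[OF assms] by blast

lemma m_rk_ge:
  assumes "matroid K" "I \<subseteq> X" "indep K I"
  shows "card I \<le> rk K X"
  using rk_ge[of K I X] matroid_wf[OF assms(1)] assms(2,3) by blast

lemma m_rk_mono:
  assumes "matroid K" "X \<subseteq> Y"
  shows "rk K X \<le> rk K Y"
proof -
  obtain I where "I \<subseteq> X" "indep K I" "card I = rk K X" using m_rk_ex[OF assms(1)] by blast
  thus ?thesis using m_rk_ge[OF assms(1), of I Y] assms(2) by auto
qed

lemma extend:
  assumes "matroid K" "indep K J" "J \<subseteq> Y"
  shows "\<exists>B. J \<subseteq> B \<and> B \<subseteq> Y \<and> indep K B \<and> card B = rk K Y"
  using assms(2,3)
proof (induction "rk K Y - card J" arbitrary: J rule: less_induct)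
  case less
  have le: "card J \<le> rk K Y" using m_rk_ge[OF assms(1) less.prems(2) less.prems(1)] .
  show ?case
  proof (cases "card J = rk K Y")
    case True
    thus ?thesis using less.prems by blast
  next
    case False
    obtain I where I: "I \<subseteq> Y" "indep K I" "card I = rk K Y" using m_rk_ex[OF assms(1)] by blast
    with False le have "card J < card I" by simp
    then obtain e where e: "e \<in> I - J" "indep K (insert e J)"
      using matroid_aug[OF assms(1) less.prems(1) I(2)] by blast
    have finJ: "finite J" using matroid_wf(1,3)[OF assms(1)] less.prems(1) finite_subset by blast
    have c: "card (insert e J) = Suc (card J)" using e(1) finJ by simp
    have "rk K Y - card (insert e J) < rk K Y - card J" using c False le by simp
    from less.hyps[OF this e(2)] e(1) I(1) less.prems(2)
    obtain B where "insert e J \<subseteq> B" "B \<subseteq> Y" "indep K B" "card B = rk K Y" by blast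
    thus ?thesis by blast
  qed
qed

lemma contract_wf:
  assumes "matroid K"
  shows "finite (ground (contract K A))" "indep (contract K A) {}"
    "\<And>I. indep (contract K A) I \<Longrightarrow> I \<subseteq> ground (contract K A)"
  using matroid_wf[OF assms] unfolding contract_def by auto

lemma contract_rk:
  assumes "matroid K" "X \<subseteq> ground K - A"
  shows "rk (contract K A) X = rk K (X \<union> (A \<inter> ground K)) - rk K (A \<inter> ground K)"
proof -
  define A' where "A' = A \<inter> ground K"
  have fin: "finite (ground K)" using matroid_wf[OF assms(1)] by auto
  have le: "rk (contract K A) X \<le> rk K (X \<union> A') - rk K A'"
  proof -
    obtain I where I: "I \<subseteq> X" "indep (contract K A) I" "card I = rk (contract K A) X"
      using rk_ex[OF contract_wf[OF assms(1)]] by blast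
    have "rk K (I \<union> A') = card I + rk K A'" using I(2) unfolding contract_def A'_def by simp
    moreover have "rk K (I \<union> A') \<le> rk K (X \<union> A')" using I(1) by (intro m_rk_mono[OF assms(1)]) blast
    ultimately show ?thesis using I(3) by simp
  qed
  obtain J where J: "J \<subseteq> A'" "indep K J" "card J = rk K A'" using m_rk_ex[OF assms(1)] by blast
  have JX: "J \<subseteq> X \<union> A'" using J(1) by blast
  from extend[OF assms(1) J(2) JX]
  obtain B where B: "J \<subseteq> B" "B \<subseteq> X \<union> A'" "indep K B" "card B = rk K (X \<union> A')" by blast
  have finB: "finite B" by (rule finite_subset[OF matroid_wf(3)[OF assms(1) B(3)] fin])
  have indBA: "indep K (B \<inter> A')" by (rule matroid_sub[OF assms(1) B(3)]) blast
  have "card (B \<inter> A') \<le> card J" using m_rk_ge[OF assms(1) _ indBA, of A'] J(3) by auto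
  moreover have "J \<subseteq> B \<inter> A'" using B(1) J(1) by blast
  moreover have "finite (B \<inter> A')" using finB by simp
  ultimately have BA: "B \<inter> A' = J" using card_seteq by blast
  define I where "I = B - J"
  have IX: "I \<subseteq> X" using B(2) BA unfolding I_def by auto
  have finJ': "finite J" using finB B(1) finite_subset by blast
  have cI: "card B = card I + card J" unfolding I_def using B(1) finB finJ'
    card_Diff_subset[OF finJ' B(1)] card_mono[OF finB B(1)] by simp
  have "B \<subseteq> I \<union> A'" unfolding I_def using BA by auto
  hence r1: "card B \<le> rk K (I \<union> A')" using m_rk_ge[OF assms(1) _ B(3)] by blast
  have r2: "rk K (I \<union> A') \<le> rk K (X \<union> A')" using IX by (intro m_rk_mono[OF assms(1)]) blast
  have "indep (contract K A) I"
    unfolding contract_def using IX assms(2) r1 r2 B(4) cI J(3) A'_def by simp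
  hence "card I \<le> rk (contract K A) X" using rk_ge[OF contract_wf[OF assms(1)] IX] by blast
  thus ?thesis using le cI B(4) J(3) A'_def by simp
qed

lemma contract_contract:
  assumes "matroid K"
  shows "contract (contract K A) B = contract K (A \<union> B)"
proof -
  have H: "indep (contract (contract K A) B) I = indep (contract K (A \<union> B)) I" for I
  proof (cases "I \<subseteq> ground K - A - B")
    case False
    thus ?thesis unfolding contract_def by auto
  next
    case True
    define A' where "A' = A \<inter> ground K"
    define B' where "B' = B \<inter> (ground K - A)"
    have gA: "ground (contract K A) = ground K - A" unfolding contract_def by simp
    have e1: "rk (contract K A) (I \<union> B') = rk K (I \<union> B' \<union> A') - rk K A'"
      using contract_rk[OF assms, of "I \<union> B'" A] True unfolding A'_def B'_def by auto
    have e2: "rk (contract K A) B' = rk K (B' \<union> A') - rk K A'"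
      using contract_rk[OF assms, of "B'" A] unfolding A'_def B'_def by auto
    have m1: "rk K A' \<le> rk K (B' \<union> A')" by (intro m_rk_mono[OF assms]) blast
    have m2: "rk K (B' \<union> A') \<le> rk K (I \<union> B' \<union> A')" by (intro m_rk_mono[OF assms]) blast
    have u: "(A \<union> B) \<inter> ground K = B' \<union> A'" unfolding A'_def B'_def by auto
    have u2: "I \<union> (B' \<union> A') = I \<union> B' \<union> A'" by auto
    have L: "indep (contract (contract K A) B) I \<longleftrightarrow>
        rk (contract K A) (I \<union> B') = card I + rk (contract K A) B'"
      using True unfolding B'_def by (simp add: contract_def[of "contract K A"] gA)
    have R: "indep (contract K (A \<union> B)) I \<longleftrightarrow>
        rk K (I \<union> B' \<union> A') = card I + rk K (B' \<union> A')"
      using True u u2 by (auto simp add: contract_def[of K "A \<union> B"])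
    show ?thesis using L R e1 e2 m1 m2 by auto
  qed
  show ?thesis by (rule meq) (auto simp: H)
qed

lemma delete_rk:
  assumes "a \<notin> Y"
  shows "rk (delete K {a}) Y = rk K Y"
proof -
  have "{I. I \<subseteq> Y \<and> indep (delete K {a}) I} = {I. I \<subseteq> Y \<and> indep K I}"
    using assms unfolding delete_def by auto
  thus ?thesis unfolding rk_def by simp
qed

lemma del_commute:
  assumes "a \<in> D" "a \<notin> C"
  shows "delete (contract K C) D = delete (contract (delete K {a}) C) (D - {a})"
proof -
  have g: "ground (delete (contract K C) D) = ground (delete (contract (delete K {a}) C) (D - {a}))"
    unfolding delete_def contract_def using assms by auto
  have i: "indep (delete (contract K C) D) I = indep (delete (contract (delete K {a}) C) (D - {a})) I" for I
  proof -
    have c: "C \<inter> ground (delete K {a}) = C \<inter> ground K" using assms unfolding delete_def by auto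
    have gd: "ground (delete K {a}) = ground K - {a}" unfolding delete_def by simp
    show ?thesis
    proof (cases "a \<in> I")
      case True
      thus ?thesis using assms by (auto simp: indep_contract)
    next
      case False
      have r1: "rk (delete K {a}) (I \<union> C \<inter> ground K) = rk K (I \<union> C \<inter> ground K)"
        using False assms by (intro delete_rk) auto
      have r2: "rk (delete K {a}) (C \<inter> ground K) = rk K (C \<inter> ground K)"
        using assms by (intro delete_rk) auto
      show ?thesis using False r1 r2 c gd assms by (auto simp: indep_contract)
    qed
  qed
  show ?thesis by (rule meq[OF g i])
qed

lemma circuit_dep:
  assumes "matroid M" "circuit M {x,a,b}" "x \<in> A" "A \<subseteq> ground M" "a \<notin> A" "b \<notin> A"
    "a \<noteq> b" "x \<noteq> a"
  shows "rk M ({a,b} \<union> A) \<noteq> 2 + rk M A"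
proof
  assume eq: "rk M ({a,b} \<union> A) = 2 + rk M A"
  have fin: "finite (ground M)" using matroid_wf[OF assms(1)] by auto
  have i1: "indep M ({x,a,b} - {a})" using circ_min[OF assms(2)] by simp
  have "{x} \<subseteq> {x,a,b} - {a}" using assms(8) by auto
  hence ix: "indep M {x}" by (rule matroid_sub[OF assms(1) i1])
  have xA: "{x} \<subseteq> A" using assms(3) by simp
  from extend[OF assms(1) ix xA]
  obtain J where J: "{x} \<subseteq> J" "J \<subseteq> A" "indep M J" "card J = rk M A" by blast
  have JA: "J \<subseteq> {a,b} \<union> A" using J(2) by blast
  from extend[OF assms(1) J(3) JA]
  obtain B where B: "J \<subseteq> B" "B \<subseteq> {a,b} \<union> A" "indep M B" "card B = rk M ({a,b} \<union> A)" by blast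
  have finB: "finite B" by (rule finite_subset[OF matroid_wf(3)[OF assms(1) B(3)] fin])
  have finJ: "finite J" by (rule finite_subset[OF matroid_wf(3)[OF assms(1) J(3)] fin])
  have indBA: "indep M (B \<inter> A)" by (rule matroid_sub[OF assms(1) B(3)]) blast
  have "card (B \<inter> A) \<le> card J" using m_rk_ge[OF assms(1) _ indBA, of A] J(4) by auto
  moreover have "J \<subseteq> B \<inter> A" using B(1) J(2) by blast
  moreover have "finite (B \<inter> A)" using finB by simp
  ultimately have BA: "B \<inter> A = J" using card_seteq by blast
  have Bsub: "B \<subseteq> insert a (insert b J)" using B(2) BA by auto
  have aJ: "a \<notin> J" "b \<notin> J" using J(2) assms(5,6) by auto
  have "card (insert a (insert b J)) = card J + 2" using aJ assms(7) finJ by simp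
  moreover have "finite (insert a (insert b J))" using finJ by simp
  ultimately have "B = insert a (insert b J)" using Bsub B(4) eq J(4) card_seteq[of "insert a (insert b J)" B] by simp
  hence "{x,a,b} \<subseteq> B" using J(1) by auto
  hence "indep M {x,a,b}" by (rule matroid_sub[OF assms(1) B(3)])
  thus False using circ_dep[OF assms(2)] by blast
qed

lemma sep2:
  assumes "matroid N" "u \<in> ground N" "v \<in> ground N" "u \<noteq> v" "\<not> indep N {u,v}"
    "card (ground N) \<ge> 4"
  shows "j_separation N 2 {u,v}"
proof -
  have fin: "finite (ground N)" using matroid_wf[OF assms(1)] by auto
  obtain I where I: "I \<subseteq> {u,v}" "indep N I" "card I = rk N {u,v}" using m_rk_ex[OF assms(1)] by blast
  have "card I \<le> 1"
  proof (rule ccontr)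
    assume "\<not> card I \<le> 1"
    hence "card I \<ge> card {u,v}" using assms(4) by simp
    hence "I = {u,v}" using I(1) card_seteq[of "{u,v}" I] by simp
    thus False using I(2) assms(5) by simp
  qed
  hence r1: "rk N {u,v} \<le> 1" using I(3) by simp
  have r2: "rk N (ground N - {u,v}) \<le> rk N (ground N)" by (intro m_rk_mono[OF assms(1)]) blast
  have c: "card (ground N - {u,v}) = card (ground N) - 2"
    using assms(2,3,4) fin by (simp add: card_Diff_subset)
  show ?thesis unfolding j_separation_def using assms r1 r2 c by auto
qed

theorem lemma3p1:
  fixes M :: "'a matroid" and N :: "'b matroid"
  assumes "matroid M" and "three_connected M"
    and "matroid N" and "three_connected N"
    and "has_minor M N" and "card (ground N) \<ge> 4"
    and "N_grounded M N T" and "x \<in> T"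
  shows "\<not> has_minor (contract M {x}) N"
proof
  assume hm: "has_minor (contract M {x}) N"
  define K where "K = contract M {x}"
  from hm obtain M' where im: "is_minor M' K" and isoM: "iso M' N"
    unfolding K_def has_minor_def by blast
  from im obtain C D where C: "C \<subseteq> ground K" and D: "D \<subseteq> ground K" and CD: "C \<inter> D = {}"
    and M': "M' = delete (contract K C) D"
    unfolding is_minor_def by blast
  from isoM obtain f where bij: "bij_betw f (ground M') (ground N)"
    and iso: "\<forall>X \<subseteq> ground M'. indep M' X \<longleftrightarrow> indep N (f ` X)"
    unfolding iso_def by blast
  have gK: "ground K = ground M - {x}" unfolding K_def by simp
  have trT: "triangle M T" using assms(7) unfolding N_grounded_def by simp
  have tri: "circuit M T" "card T = 3" using trT unfolding triangle_def by simp_all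
  have gr: "\<forall>a \<in> T. \<forall>b \<in> T. a \<noteq> b \<longrightarrow>
        \<not> has_minor (contract (contract M {a}) {b}) N \<and>
        \<not> has_minor (delete (contract M {a}) {b}) N \<and>
        \<not> has_minor (contract (delete M {a}) {b}) N \<and>
        \<not> has_minor (delete (delete M {a}) {b}) N"
    using assms(7) unfolding N_grounded_def by simp
  have finT: "finite T" using tri(2) by (metis card.infinite zero_neq_numeral)
  have "card (T - {x}) = 2" using tri(2) finT assms(8) by simp
  then obtain a b where ab: "T - {x} = {a,b}" "a \<noteq> b" by (meson card_2_iff)
  have T: "T = {x,a,b}" using ab assms(8) by auto
  have xab: "x \<noteq> a" "x \<noteq> b" using ab by auto
  have Tg: "T \<subseteq> ground M" using tri(1) unfolding circuit_def by simp
  have cc: "contract K C = contract M ({x} \<union> C)"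
    unfolding K_def by (rule contract_contract[OF assms(1)])
  have notin: "y \<notin> C \<and> y \<notin> D" if y: "y \<in> T" "y \<noteq> x" for y
  proof -
    have xy: "x \<noteq> y" using y(2) by simp
    have gxy: "\<not> has_minor (contract (contract M {x}) {y}) N \<and>
        \<not> has_minor (delete (contract M {x}) {y}) N"
      using bspec[OF bspec[OF gr assms(8)] y(1)] xy by simp
    have g1: "\<not> has_minor (contract (contract M {x}) {y}) N" using gxy by simp
    have g2: "\<not> has_minor (delete (contract M {x}) {y}) N" using gxy by simp
    show ?thesis
    proof (intro conjI notI)
      assume yC: "y \<in> C"
      have e1: "contract (contract K {y}) (C - {y}) = contract M ({x} \<union> {y} \<union> (C - {y}))"
        unfolding K_def by (simp add: contract_contract[OF assms(1)])
      have e2: "{x} \<union> {y} \<union> (C - {y}) = {x} \<union> C" using yC by auto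
      have e: "contract K C = contract (contract K {y}) (C - {y})" using cc e1 e2 by simp
      have yD: "y \<notin> D" using yC CD by blast
      have "is_minor M' (contract K {y})"
        unfolding is_minor_def
      proof (intro exI conjI)
        show "C - {y} \<subseteq> ground (contract K {y})" using C by auto
        show "D \<subseteq> ground (contract K {y})" using D yD by auto
        show "(C - {y}) \<inter> D = {}" using CD by auto
        show "M' = delete (contract (contract K {y}) (C - {y})) D" using M' e by simp
      qed
      hence "has_minor (contract K {y}) N" unfolding has_minor_def using isoM by blast
      thus False using g1 unfolding K_def by simp
    next
      assume yD: "y \<in> D"
      have yC: "y \<notin> C" using yD CD by blast
      have e: "M' = delete (contract (delete K {y}) C) (D - {y})"
        using M' del_commute[OF yD yC] by simp
      have "is_minor M' (delete K {y})"
        unfolding is_minor_def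
      proof (intro exI conjI)
        show "C \<subseteq> ground (delete K {y})" using C yC by auto
        show "D - {y} \<subseteq> ground (delete K {y})" using D by auto
        show "C \<inter> (D - {y}) = {}" using CD by auto
        show "M' = delete (contract (delete K {y}) C) (D - {y})" by (rule e)
      qed
      hence "has_minor (delete K {y}) N" unfolding has_minor_def using isoM by blast
      thus False using g2 unfolding K_def by simp
    qed
  qed
  have na: "a \<notin> C" "a \<notin> D" "b \<notin> C" "b \<notin> D"
    using notin[of a] notin[of b] T xab by auto
  have gM': "ground M' = ground M - {x} - C - D" using M' gK by simp
  have abg: "{a,b} \<subseteq> ground M'" using gM' na Tg T xab by auto
  have dep: "\<not> indep M' {a,b}"
  proof
    assume "indep M' {a,b}"
    hence "indep (contract K C) {a,b}" using M' by simp
    hence "indep (contract M ({x} \<union> C)) {a,b}" using cc by simp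
    hence "rk M ({a,b} \<union> ({x} \<union> C) \<inter> ground M) = card {a,b} + rk M (({x} \<union> C) \<inter> ground M)"
      unfolding indep_contract by simp
    hence "rk M ({a,b} \<union> ({x} \<union> C) \<inter> ground M) = 2 + rk M (({x} \<union> C) \<inter> ground M)"
      using ab(2) by simp
    moreover have "rk M ({a,b} \<union> ({x} \<union> C) \<inter> ground M) \<noteq> 2 + rk M (({x} \<union> C) \<inter> ground M)"
    proof (rule circuit_dep[OF assms(1)])
      show "circuit M {x,a,b}" using tri(1) T by simp
      show "x \<in> ({x} \<union> C) \<inter> ground M" using Tg T by auto
      show "({x} \<union> C) \<inter> ground M \<subseteq> ground M" by blast
      show "a \<notin> ({x} \<union> C) \<inter> ground M" using na xab by auto
      show "b \<notin> ({x} \<union> C) \<inter> ground M" using na xab by auto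
      show "a \<noteq> b" by (rule ab(2))
      show "x \<noteq> a" by (rule xab(1))
    qed
    ultimately show False by simp
  qed
  have fab: "f ` {a,b} = {f a, f b}" by simp
  have "\<not> indep N {f a, f b}" using iso abg dep fab by metis
  moreover have "f a \<noteq> f b" using bij abg ab(2) unfolding bij_betw_def inj_on_def by auto
  moreover have "f a \<in> ground N" "f b \<in> ground N" using bij abg unfolding bij_betw_def by auto
  ultimately have "j_separation N 2 {f a, f b}" using sep2[OF assms(3)] assms(6) by blast
  thus False using assms(4) unfolding three_connected_def by auto
qed

end
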